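(* Let $n\ge2$, let $f=(f_1,\dots,f_n):\{-1,1\}^n\to\{-1,1\}^n$ be a bijection, and let $k$ be an integer with $1\le k\le n-1$. Then $\deg(f_i)=1$ for all $i\in[n]$ if and only if for every $S\subset[n]$ with $|S|=k$ there exists $T\subset[n]$ with $|T|=k$ such that: (a) for every $j\in T$, $\mathrm{Inf}_i(f_j)>0$ for at least one $i\in S$; and (b) for every $j\in[n]\setminus T$, $\mathrm{Inf}_i(f_j)=0$ for every $i\in S$.
   Context: For $f:\{-1,1\}^n\to\mathbb{R}$, $f=\sum_{S\subseteq[n]}\hat f(S)\chi_S$ with $\chi_S(x)=\prod_{i\in S}x_i$, and $\deg(f)=\max\{|S|:\hat f(S)\ne0\}$. For $g:\{-1,1\}^n\to\{-1,1\}$ and $i\in[n]$, the influence is $\mathrm{Inf}_i(g):=\Pr_{x\sim U(\{-1,1\}^n)}[g(x)\ne g(x^{\oplus i})]$, where $x^{\oplus i}$ is $x$ with its $i$-th coordinate negated. *)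

theory Defs
  imports Complex_Main
begin

text \<open>The Boolean cube \<open>{-1,1}^n\<close>, coordinates indexed by \<open>{0..<n}\<close>;
  points are functions \<open>nat \<Rightarrow> real\<close> that are 0 outside \<open>{0..<n}\<close>.\<close>
definition cube :: "nat \<Rightarrow> (nat \<Rightarrow> real) set" where
  "cube n = {x. (\<forall>i<n. x i = 1 \<or> x i = -1) \<and> (\<forall>i. n \<le> i \<longrightarrow> x i = 0)}"

definition chi :: "nat set \<Rightarrow> (nat \<Rightarrow> real) \<Rightarrow> real" where
  "chi S x = (\<Prod>i\<in>S. x i)"

definition fcoeff :: "nat \<Rightarrow> ((nat \<Rightarrow> real) \<Rightarrow> real) \<Rightarrow> nat set \<Rightarrow> real" where
  "fcoeff n f S = (\<Sum>x\<in>cube n. f x * chi S x) / 2 ^ n"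

definition fdeg :: "nat \<Rightarrow> ((nat \<Rightarrow> real) \<Rightarrow> real) \<Rightarrow> nat" where
  "fdeg n f = Max ({0} \<union> {card S | S. S \<subseteq> {..<n} \<and> fcoeff n f S \<noteq> 0})"

definition flip :: "nat \<Rightarrow> (nat \<Rightarrow> real) \<Rightarrow> (nat \<Rightarrow> real)" where
  "flip i x = x(i := - x i)"

definition infl :: "nat \<Rightarrow> ((nat \<Rightarrow> real) \<Rightarrow> real) \<Rightarrow> nat \<Rightarrow> real" where
  "infl n g i = real (card {x\<in>cube n. g x \<noteq> g (flip i x)}) / 2 ^ n"

end

theory Submission
  imports Defs
begin

lemma cube_sub: "cube n \<subseteq> (\<lambda>xs i. if i < n then xs ! i else 0) ` {xs. set xs \<subseteq> {1,-1} \<and> length xs = n}"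
proof
  fix x assume x: "x \<in> cube n"
  let ?xs = "map x [0..<n]"
  have "x = (\<lambda>i. if i < n then ?xs ! i else 0)"
    using x by (auto simp: cube_def fun_eq_iff)
  moreover have "set ?xs \<subseteq> {1,-1}" using x by (auto simp: cube_def)
  ultimately show "x \<in> (\<lambda>xs i. if i < n then xs ! i else 0) ` {xs. set xs \<subseteq> {1,-1} \<and> length xs = n}"
    by force
qed

lemma finite_cube: "finite (cube n)"
  by (rule finite_subset[OF cube_sub]) (auto intro: finite_lists_length_eq)

lemma cube_val: "x \<in> cube n \<Longrightarrow> i < n \<Longrightarrow> x i = 1 \<or> x i = -1"
  by (auto simp: cube_def)

lemma cube_out: "x \<in> cube n \<Longrightarrow> n \<le> i \<Longrightarrow> x i = 0"
  by (auto simp: cube_def)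

lemma flip_cube: "x \<in> cube n \<Longrightarrow> i < n \<Longrightarrow> flip i x \<in> cube n"
  by (auto simp: cube_def flip_def)

lemma flip_flip[simp]: "flip i (flip i x) = x"
  by (auto simp: flip_def)

lemma flip_neq: "x \<in> cube n \<Longrightarrow> i < n \<Longrightarrow> flip i x \<noteq> x"
  by (auto simp: cube_def flip_def fun_eq_iff dest!: spec[of _ i])

lemma chi_flip_in: "finite S \<Longrightarrow> i \<in> S \<Longrightarrow> chi S (flip i x) = - chi S x"
proof -
  assume "finite S" "i \<in> S"
  then have "chi S (flip i x) = flip i x i * (\<Prod>j\<in>S-{i}. flip i x j)"
    unfolding chi_def by (simp add: prod.remove)
  also have "(\<Prod>j\<in>S-{i}. flip i x j) = (\<Prod>j\<in>S-{i}. x j)"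
    by (rule prod.cong) (auto simp: flip_def)
  also have "flip i x i * (\<Prod>j\<in>S-{i}. x j) = - (x i * (\<Prod>j\<in>S-{i}. x j))"
    by (simp add: flip_def)
  also have "x i * (\<Prod>j\<in>S-{i}. x j) = chi S x"
    unfolding chi_def using \<open>finite S\<close> \<open>i \<in> S\<close> by (simp add: prod.remove)
  finally show ?thesis .
qed

lemma chi_flip_out: "i \<notin> S \<Longrightarrow> chi S (flip i x) = chi S x"
  unfolding chi_def by (rule prod.cong) (auto simp: flip_def)

lemma kernel:
  assumes x: "x \<in> cube n" and y: "y \<in> cube n"
  shows "(\<Sum>S\<in>Pow {..<n}. chi S y * chi S x) = (if y = x then 2 ^ n else 0)"
proof -
  have "(\<Sum>S\<in>Pow {..<n}. chi S y * chi S x) = (\<Sum>S\<in>Pow {..<n}. (\<Prod>i\<in>S. y i * x i) * (\<Prod>i\<in>{..<n}-S. 1))"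
    by (rule sum.cong) (auto simp: chi_def prod.distrib)
  also have "\<dots> = (\<Prod>i\<in>{..<n}. y i * x i + 1)"
    by (rule prod_add[symmetric]) simp
  finally have eq: "(\<Sum>S\<in>Pow {..<n}. chi S y * chi S x) = (\<Prod>i\<in>{..<n}. y i * x i + 1)" .
  show ?thesis
  proof (cases "y = x")
    case True
    have "(\<Prod>i\<in>{..<n}. y i * x i + 1) = (\<Prod>i\<in>{..<n}. (2::real))"
      by (rule prod.cong) (use x True cube_val[OF x] in fastforce)+
    then show ?thesis using eq True by simp
  next
    case False
    then have "\<exists>i. x i \<noteq> y i" by (metis ext)
    then obtain i where "x i \<noteq> y i" by blast
    moreover have "i < n" using calculation x y cube_out[OF x] cube_out[OF y] by (metis not_le)
    ultimately have "y i * x i + 1 = 0" using cube_val[OF x] cube_val[OF y] by force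
    then have "(\<Prod>i\<in>{..<n}. y i * x i + 1) = 0"
      using \<open>i < n\<close> by (intro prod_zero) auto
    then show ?thesis using eq False by simp
  qed
qed

lemma inversion:
  assumes x: "x \<in> cube n"
  shows "g x = (\<Sum>S\<in>Pow {..<n}. fcoeff n g S * chi S x)"
proof -
  have "(\<Sum>S\<in>Pow {..<n}. fcoeff n g S * chi S x)
      = (\<Sum>S\<in>Pow {..<n}. \<Sum>y\<in>cube n. g y * (chi S y * chi S x)) / 2 ^ n"
    unfolding fcoeff_def sum_divide_distrib
    by (rule sum.cong) (auto simp: sum_distrib_right sum_divide_distrib mult.assoc)
  also have "(\<Sum>S\<in>Pow {..<n}. \<Sum>y\<in>cube n. g y * (chi S y * chi S x))
      = (\<Sum>y\<in>cube n. g y * (\<Sum>S\<in>Pow {..<n}. chi S y * chi S x))"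
    by (subst sum.swap) (simp add: sum_distrib_left)
  also have "\<dots> = (\<Sum>y\<in>cube n. if y = x then g x * 2 ^ n else 0)"
    by (rule sum.cong) (auto simp: kernel[OF x])
  also have "\<dots> = g x * 2 ^ n" using x finite_cube by simp
  finally show ?thesis by simp
qed


lemma sum_single:
  fixes f :: "'a \<Rightarrow> real"
  assumes "finite A" "a \<in> A" "\<And>x. x \<in> A \<Longrightarrow> x \<noteq> a \<Longrightarrow> f x = 0"
  shows "sum f A = f a"
proof -
  have "sum f A = f a + sum f (A - {a})" using assms(1,2) by (rule sum.remove)
  also have "sum f (A - {a}) = 0" using assms(3) by (intro sum.neutral) auto
  finally show ?thesis by simp
qed

lemma infl_zero_iff: "infl n g i = 0 \<longleftrightarrow> (\<forall>x\<in>cube n. g x = g (flip i x))"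
  unfolding infl_def using finite_cube[of n] by auto

lemma infl_pos_iff: "infl n g i > 0 \<longleftrightarrow> (\<exists>x\<in>cube n. g x \<noteq> g (flip i x))"
proof -
  have "infl n g i \<ge> 0" unfolding infl_def by simp
  then have "infl n g i > 0 \<longleftrightarrow> infl n g i \<noteq> 0" by linarith
  then show ?thesis using infl_zero_iff[of n g i] by auto
qed

lemma coeff_zero_flip:
  assumes i: "i < n" and inv: "\<forall>x\<in>cube n. g (flip i x) = g x"
    and S: "S \<subseteq> {..<n}" "i \<in> S"
  shows "fcoeff n g S = 0"
proof -
  have fin: "finite S" using S finite_subset by blast
  have "(\<Sum>x\<in>cube n. g x * chi S x) = (\<Sum>x\<in>cube n. - (g x * chi S x))"
    by (rule sum.reindex_bij_witness[of _ "flip i" "flip i"])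
       (auto simp: flip_cube i inv chi_flip_in[OF fin S(2)])
  then have "(\<Sum>x\<in>cube n. g x * chi S x) = 0" by (simp add: sum_negf)
  then show ?thesis unfolding fcoeff_def by simp
qed

lemma flip_from_coeff:
  assumes i: "i < n" and c: "\<forall>S\<subseteq>{..<n}. i \<in> S \<longrightarrow> fcoeff n g S = 0"
    and x: "x \<in> cube n"
  shows "g (flip i x) = g x"
proof -
  have "g (flip i x) = (\<Sum>S\<in>Pow {..<n}. fcoeff n g S * chi S (flip i x))"
    using inversion flip_cube[OF x i] by blast
  also have "\<dots> = (\<Sum>S\<in>Pow {..<n}. fcoeff n g S * chi S x)"
  proof (rule sum.cong)
    fix S assume "S \<in> Pow {..<n}"
    then show "fcoeff n g S * chi S (flip i x) = fcoeff n g S * chi S x"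
      by (cases "i \<in> S") (auto simp: c chi_flip_out)
  qed simp
  also have "\<dots> = g x" using inversion[OF x] by simp
  finally show ?thesis .
qed

lemma infl_zero_coeff:
  assumes i: "i < n"
  shows "infl n g i = 0 \<longleftrightarrow> (\<forall>S\<subseteq>{..<n}. i \<in> S \<longrightarrow> fcoeff n g S = 0)"
proof
  assume "infl n g i = 0"
  then have "\<forall>x\<in>cube n. g (flip i x) = g x" using infl_zero_iff[of n g i] by auto
  then show "\<forall>S\<subseteq>{..<n}. i \<in> S \<longrightarrow> fcoeff n g S = 0"
    using coeff_zero_flip[OF i] by blast
next
  assume c: "\<forall>S\<subseteq>{..<n}. i \<in> S \<longrightarrow> fcoeff n g S = 0"
  have "\<forall>x\<in>cube n. g x = g (flip i x)"
  proof
    fix x assume "x \<in> cube n"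
    then show "g x = g (flip i x)" using flip_from_coeff[OF i c] by simp
  qed
  then show "infl n g i = 0" using infl_zero_iff[of n g i] by auto
qed

lemma const_from_coeff:
  assumes c: "\<forall>S\<subseteq>{..<n}. S \<noteq> {} \<longrightarrow> fcoeff n g S = 0" and x: "x \<in> cube n"
  shows "g x = fcoeff n g {}"
proof -
  have "g x = (\<Sum>S\<in>Pow {..<n}. fcoeff n g S * chi S x)" using inversion[OF x] .
  also have "\<dots> = fcoeff n g {} * chi {} x"
    by (rule sum_single) (auto simp: c)
  finally show ?thesis by (simp add: chi_def)
qed

lemma fdeg_finite: "finite {card S | S. S \<subseteq> {..<n} \<and> fcoeff n g S \<noteq> 0}"
proof -
  have "{card S | S. S \<subseteq> {..<n} \<and> fcoeff n g S \<noteq> 0} \<subseteq> card ` Pow {..<n}" by auto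
  then show ?thesis by (rule finite_subset) simp
qed

lemma fdeg1_D:
  assumes "fdeg n g = 1"
  shows "\<forall>S\<subseteq>{..<n}. fcoeff n g S \<noteq> 0 \<longrightarrow> card S \<le> 1"
    and "\<exists>i<n. fcoeff n g {i} \<noteq> 0"
proof -
  let ?C = "{card S | S. S \<subseteq> {..<n} \<and> fcoeff n g S \<noteq> 0}"
  have fin: "finite ({0} \<union> ?C)" using fdeg_finite by simp
  show "\<forall>S\<subseteq>{..<n}. fcoeff n g S \<noteq> 0 \<longrightarrow> card S \<le> 1"
  proof (intro allI impI)
    fix S assume "S \<subseteq> {..<n}" "fcoeff n g S \<noteq> 0"
    then have "card S \<in> {0} \<union> ?C" by auto
    then have "card S \<le> Max ({0} \<union> ?C)" using fin by simp
    then show "card S \<le> 1" using assms unfolding fdeg_def by simp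
  qed
  have "Max ({0} \<union> ?C) \<in> {0} \<union> ?C" using fin by (intro Max_in) auto
  then have "1 \<in> ?C" using assms unfolding fdeg_def by simp
  then obtain S where S: "S \<subseteq> {..<n}" "fcoeff n g S \<noteq> 0" "card S = 1" by auto
  then obtain i where "S = {i}" by (meson card_1_singletonE)
  then show "\<exists>i<n. fcoeff n g {i} \<noteq> 0" using S by auto
qed

lemma fdeg1_I:
  assumes "\<forall>S\<subseteq>{..<n}. fcoeff n g S \<noteq> 0 \<longrightarrow> card S \<le> 1"
    and "i < n" "fcoeff n g {i} \<noteq> 0"
  shows "fdeg n g = 1"
  unfolding fdeg_def
proof (rule Max_eqI)
  show "finite ({0} \<union> {card S | S. S \<subseteq> {..<n} \<and> fcoeff n g S \<noteq> 0})" using fdeg_finite by simp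
  show "\<And>y. y \<in> {0} \<union> {card S | S. S \<subseteq> {..<n} \<and> fcoeff n g S \<noteq> 0} \<Longrightarrow> y \<le> 1"
    using assms(1) by auto
  show "1 \<in> {0} \<union> {card S | S. S \<subseteq> {..<n} \<and> fcoeff n g S \<noteq> 0}"
    using assms(2,3) by (auto intro!: exI[of _ "{i}"])
qed

lemma diff_flip:
  assumes d: "\<forall>S\<subseteq>{..<n}. fcoeff n g S \<noteq> 0 \<longrightarrow> card S \<le> 1"
    and i: "i < n" and x: "x \<in> cube n"
  shows "g x - g (flip i x) = 2 * fcoeff n g {i} * x i"
proof -
  have "g x - g (flip i x) = (\<Sum>S\<in>Pow {..<n}. fcoeff n g S * (chi S x - chi S (flip i x)))"
    using inversion[OF x, of g] inversion[OF flip_cube[OF x i], of g]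
    by (simp add: sum_subtractf right_diff_distrib)
  also have "\<dots> = fcoeff n g {i} * (chi {i} x - chi {i} (flip i x))"
  proof (rule sum_single)
    show "{i} \<in> Pow {..<n}" using i by simp
    show "finite (Pow {..<n})" by simp
    fix S assume S: "S \<in> Pow {..<n}" "S \<noteq> {i}"
    show "fcoeff n g S * (chi S x - chi S (flip i x)) = 0"
    proof (cases "i \<in> S")
      case True
      have "fcoeff n g S = 0"
      proof (rule ccontr)
        assume "fcoeff n g S \<noteq> 0"
        then have "card S \<le> 1" using d S by auto
        moreover have "finite S" using S finite_subset by auto
        ultimately have "S = {i}" using True S(2)
          using card_le_Suc0_iff_eq[of S] by auto
        then show False using S by simp
      qed
      then show ?thesis by simp
    qed (simp add: chi_flip_out)
  qed
  also have "\<dots> = 2 * fcoeff n g {i} * x i" by (simp add: chi_def flip_def)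
  finally show ?thesis .
qed

definition x0 :: "nat \<Rightarrow> nat \<Rightarrow> real" where "x0 n = (\<lambda>i. if i < n then 1 else 0)"

lemma x0_cube: "x0 n \<in> cube n" by (auto simp: x0_def cube_def)

lemma deg1_infl:
  assumes d: "\<forall>S\<subseteq>{..<n}. fcoeff n g S \<noteq> 0 \<longrightarrow> card S \<le> 1" and i: "i < n"
  shows "infl n g i > 0 \<longleftrightarrow> fcoeff n g {i} \<noteq> 0"
proof
  assume "infl n g i > 0"
  then obtain x where "x \<in> cube n" "g x \<noteq> g (flip i x)" using infl_pos_iff[of n g i] by auto
  then show "fcoeff n g {i} \<noteq> 0" using diff_flip[OF d i] by fastforce
next
  assume "fcoeff n g {i} \<noteq> 0"
  then have "g (x0 n) \<noteq> g (flip i (x0 n))" using diff_flip[OF d i x0_cube] i by (auto simp: x0_def)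
  then show "infl n g i > 0" using infl_pos_iff[of n g i] x0_cube by auto
qed

lemma bool_one:
  assumes d: "\<forall>S\<subseteq>{..<n}. fcoeff n g S \<noteq> 0 \<longrightarrow> card S \<le> 1"
    and b: "\<forall>x\<in>cube n. g x = 1 \<or> g x = -1"
    and i: "i < n" and l: "l < n"
    and ci: "fcoeff n g {i} \<noteq> 0" and cl: "fcoeff n g {l} \<noteq> 0"
  shows "i = l"
proof (rule ccontr)
  assume il: "i \<noteq> l"
  define a where "a = fcoeff n g {i}"
  define c where "c = fcoeff n g {l}"
  have fi: "g (flip i x) = - g x" if x: "x \<in> cube n" for x
  proof -
    have "g x - g (flip i x) = 2 * a * x i" using diff_flip[OF d i x] a_def by simp
    moreover have "x i \<noteq> 0" using cube_val[OF x i] by auto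
    ultimately have "g x \<noteq> g (flip i x)" using ci a_def by auto
    moreover have "g x = 1 \<or> g x = -1" "g (flip i x) = 1 \<or> g (flip i x) = -1" using b x flip_cube[OF x i] by auto
    ultimately show ?thesis by auto
  qed
  have fl: "g (flip l x) = - g x" if x: "x \<in> cube n" for x
  proof -
    have "g x - g (flip l x) = 2 * c * x l" using diff_flip[OF d l x] c_def by simp
    moreover have "x l \<noteq> 0" using cube_val[OF x l] by auto
    ultimately have "g x \<noteq> g (flip l x)" using cl c_def by auto
    moreover have "g x = 1 \<or> g x = -1" "g (flip l x) = 1 \<or> g (flip l x) = -1" using b x flip_cube[OF x l] by auto
    ultimately show ?thesis by auto
  qed
  have a1: "a = 1 \<or> a = -1"
  proof -
    have "g (x0 n) - g (flip i (x0 n)) = 2 * a" using diff_flip[OF d i x0_cube] a_def i by (simp add: x0_def)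
    then show ?thesis using fi[OF x0_cube] b x0_cube by force
  qed
  have c1: "c = 1 \<or> c = -1"
  proof -
    have "g (x0 n) - g (flip l (x0 n)) = 2 * c" using diff_flip[OF d l x0_cube] c_def l by (simp add: x0_def)
    then show ?thesis using fl[OF x0_cube] b x0_cube by force
  qed
  define y where "y = (x0 n)(l := a * c)"
  have y: "y \<in> cube n" using a1 c1 l by (auto simp: y_def x0_def cube_def)
  have fly: "flip l y \<in> cube n" using flip_cube[OF y l] .
  have e1: "g y - g (flip l y) = 2 * c * (a * c)" using diff_flip[OF d l y] c_def by (simp add: y_def)
  have e2: "g (flip l y) - g (flip i (flip l y)) = 2 * a"
    using diff_flip[OF d i fly] a_def il i by (simp add: y_def flip_def x0_def)
  have "g (flip i (flip l y)) = g y" using fi[OF fly] fl[OF y] by simp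
  then have "2 * c * (a * c) + 2 * a = 0" using e1 e2 by linarith
  then show False using a1 c1 by auto
qed



lemma finN: "finite {j. j < (n::nat) \<and> P j}"
  by (rule finite_subset[of _ "{..<n}"]) auto

lemma comb_step:
  fixes D :: "nat \<Rightarrow> nat \<Rightarrow> bool"
  assumes mn: "m + 1 < n"
    and hk: "\<And>S. S \<subseteq> {..<n} \<Longrightarrow> card S = m + 1 \<Longrightarrow> card {j. j < n \<and> (\<exists>i\<in>S. D i j)} \<le> m + 1"
    and cov: "\<And>j. j < n \<Longrightarrow> \<exists>i<n. D i j"
    and S: "S \<subseteq> {..<n}" "card S = m"
  shows "card {j. j < n \<and> (\<exists>i\<in>S. D i j)} \<le> m"
proof (rule ccontr)
  let ?N = "\<lambda>S. {j. j < n \<and> (\<exists>i\<in>S. D i j)}"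
  assume "\<not> card (?N S) \<le> m"
  then have big: "m + 1 \<le> card (?N S)" by simp
  have finS: "finite S" using S finite_subset by blast
  have ext: "?N (insert c S) = ?N S" if c: "c < n" "c \<notin> S" for c
  proof -
    have cI: "card (insert c S) = m + 1" using c finS S by simp
    have sI: "insert c S \<subseteq> {..<n}" using c S by simp
    have le: "card (?N (insert c S)) \<le> m + 1" by (rule hk[OF sI cI])
    have sub: "?N S \<subseteq> ?N (insert c S)" by blast
    have "card (?N S) \<le> card (?N (insert c S))" by (rule card_mono[OF finN sub])
    then have "card (?N S) = card (?N (insert c S))" using le big by linarith
    then show ?thesis using card_subset_eq[OF finN sub] by simp
  qed
  have all: "{..<n} \<subseteq> ?N S"
  proof
    fix j assume jn: "j \<in> {..<n}"
    then obtain i where i: "i < n" "D i j" using cov by blast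
    show "j \<in> ?N S"
    proof (cases "i \<in> S")
      case True then show ?thesis using i jn by blast
    next
      case False
      then have "j \<in> ?N (insert i S)" using i jn by blast
      then show ?thesis using ext[OF i(1) False] by (simp only:)
    qed
  qed
  have "S \<noteq> {..<n}" using S mn by auto
  then obtain c where c: "c < n" "c \<notin> S" using S by blast
  have cI: "card (insert c S) = m + 1" using c finS S by simp
  have sI: "insert c S \<subseteq> {..<n}" using c S by simp
  have "card (?N (insert c S)) \<le> m + 1" by (rule hk[OF sI cI])
  then have "card (?N S) \<le> m + 1" using ext[OF c] by simp
  moreover have "n \<le> card (?N S)" using card_mono[OF finN all] by simp
  ultimately show False using mn by simp
qed

lemma comb_down:
  fixes D :: "nat \<Rightarrow> nat \<Rightarrow> bool"
  assumes kn: "k < n"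
    and hk: "\<And>S. S \<subseteq> {..<n} \<Longrightarrow> card S = k \<Longrightarrow> card {j. j < n \<and> (\<exists>i\<in>S. D i j)} \<le> k"
    and cov: "\<And>j. j < n \<Longrightarrow> \<exists>i<n. D i j"
  shows "m + d = k \<Longrightarrow> S \<subseteq> {..<n} \<Longrightarrow> card S = m \<Longrightarrow> card {j. j < n \<and> (\<exists>i\<in>S. D i j)} \<le> m"
proof (induction d arbitrary: m S)
  case 0 then show ?case using hk by simp
next
  case (Suc d)
  have IH: "card {j. j < n \<and> (\<exists>i\<in>S'. D i j)} \<le> m + 1" if "S' \<subseteq> {..<n}" "card S' = m + 1" for S'
    using Suc.IH[of "m + 1" S'] Suc.prems(1) that by simp
  have "m + 1 < n" using Suc.prems(1) kn by simp
  then show ?case using comb_step[of m n D S, OF _ IH cov] Suc.prems(2,3) by blast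
qed

lemma comb_unique:
  fixes D :: "nat \<Rightarrow> nat \<Rightarrow> bool"
  assumes k1: "1 \<le> k" and kn: "k < n"
    and hk: "\<And>S. S \<subseteq> {..<n} \<Longrightarrow> card S = k \<Longrightarrow> card {j. j < n \<and> (\<exists>i\<in>S. D i j)} \<le> k"
    and cov: "\<And>j. j < n \<Longrightarrow> \<exists>i<n. D i j"
    and j: "j < n" and i1: "i1 < n" "D i1 j" and i2: "i2 < n" "D i2 j"
  shows "i1 = i2"
proof (rule ccontr)
  assume ne: "i1 \<noteq> i2"
  let ?N = "\<lambda>i. {j. j < n \<and> D i j}"
  have one: "card (?N i) \<le> 1" if "i < n" for i
  proof -
    have "1 + (k - 1) = k" using k1 by simp
    moreover have "{i} \<subseteq> {..<n}" using that by simp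
    ultimately have "card {j. j < n \<and> (\<exists>i'\<in>{i}. D i' j)} \<le> 1"
      using comb_down[OF kn hk cov, of 1 "k - 1" "{i}"] by simp
    then show ?thesis by simp
  qed
  have sing: "?N i = {j}" if "i < n" "D i j" for i
  proof -
    have jin: "j \<in> ?N i" using that j by simp
    have "\<forall>a\<in>?N i. \<forall>b\<in>?N i. a = b" using one[OF that(1)] card_le_Suc0_iff_eq[OF finN] by simp
    then show ?thesis using jin by blast
  qed
  have cover: "{..<n} \<subseteq> (\<Union>i\<in>{..<n} - {i2}. ?N i)"
  proof
    fix j' assume jn: "j' \<in> {..<n}"
    then obtain i where i: "i < n" "D i j'" using cov by blast
    show "j' \<in> (\<Union>i\<in>{..<n} - {i2}. ?N i)"
    proof (cases "i = i2")
      case True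
      then have "j' \<in> ?N i2" using i jn by simp
      then have "j' = j" using sing[OF i2] by simp
      then show ?thesis using i1 ne j by blast
    next
      case False then show ?thesis using i jn by blast
    qed
  qed
  have "n \<le> card (\<Union>i\<in>{..<n} - {i2}. ?N i)"
    using card_mono[OF _ cover] by simp
  also have "\<dots> \<le> (\<Sum>i\<in>{..<n} - {i2}. card (?N i))" by (rule card_UN_le) simp
  also have "\<dots> \<le> (\<Sum>i\<in>{..<n} - {i2}. 1)" by (rule sum_mono) (use one in fastforce)
  also have "\<dots> = n - 1" using i2 by simp
  finally show False using kn by simp
qed


lemma infl_nonneg: "infl n g i \<ge> 0"
  unfolding infl_def by simp

theorem mainTheorem9:
  fixes n k :: nat and F :: "(nat \<Rightarrow> real) \<Rightarrow> (nat \<Rightarrow> real)"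
  assumes "n \<ge> 2" and "bij_betw F (cube n) (cube n)" and "1 \<le> k" and "k \<le> n - 1"
  shows "(\<forall>i<n. fdeg n (\<lambda>x. F x i) = 1) \<longleftrightarrow>
    (\<forall>S. S \<subseteq> {..<n} \<and> card S = k \<longrightarrow>
      (\<exists>T. T \<subseteq> {..<n} \<and> card T = k \<and>
        (\<forall>j\<in>T. \<exists>i\<in>S. infl n (\<lambda>x. F x j) i > 0) \<and>
        (\<forall>j\<in>{..<n} - T. \<forall>i\<in>S. infl n (\<lambda>x. F x j) i = 0)))"
proof -
  note bij = assms(2)
  define D where "D = (\<lambda>i j. infl n (\<lambda>x. F x j) i > 0)"
  have kn: "k < n" using assms by simp
  have Fc: "F x \<in> cube n" if "x \<in> cube n" for x using bij_betwE[OF bij] that by blast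
  have Fb: "F x j = 1 \<or> F x j = -1" if "x \<in> cube n" "j < n" for x j
    using Fc[OF that(1)] that(2) by (rule cube_val)
  have Fo: "F x j = 0" if "x \<in> cube n" "n \<le> j" for x j
    using Fc[OF that(1)] that(2) by (rule cube_out)
  have Dz: "\<not> D i j \<Longrightarrow> infl n (\<lambda>x. F x j) i = 0" for i j
    unfolding D_def using infl_nonneg[of n "\<lambda>x. F x j" i] by linarith
  have cov: "\<forall>j<n. \<exists>i<n. D i j"
  proof (intro allI impI, rule ccontr)
    fix j assume j: "j < n" and nd: "\<not> (\<exists>i<n. D i j)"
    have "\<forall>S\<subseteq>{..<n}. S \<noteq> {} \<longrightarrow> fcoeff n (\<lambda>x. F x j) S = 0"
    proof (intro allI impI)
      fix S assume S: "S \<subseteq> {..<n}" "S \<noteq> {}"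
      then obtain i where i: "i \<in> S" by auto
      then have "i < n" using S by auto
      then have "\<not> D i j" using nd by blast
      then have "infl n (\<lambda>x. F x j) i = 0" by (rule Dz)
      then have "\<forall>S\<subseteq>{..<n}. i \<in> S \<longrightarrow> fcoeff n (\<lambda>x. F x j) S = 0"
        using infl_zero_coeff[OF \<open>i < n\<close>] by blast
      then show "fcoeff n (\<lambda>x. F x j) S = 0" using S i by blast
    qed
    note cst = const_from_coeff[OF this]
    have im: "F ` cube n = cube n" using bij by (rule bij_betw_imp_surj_on)
    have "x0 n \<in> F ` cube n" using im x0_cube by (simp only:)
    then obtain a where a: "x0 n = F a" "a \<in> cube n" by (rule imageE)
    have "flip j (x0 n) \<in> F ` cube n" using im flip_cube[OF x0_cube j] by (simp only:)
    then obtain b where b: "flip j (x0 n) = F b" "b \<in> cube n" by (rule imageE)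
    have e1: "F a j = fcoeff n (\<lambda>x. F x j) {}" by (rule cst[OF a(2)])
    have e2: "F b j = fcoeff n (\<lambda>x. F x j) {}" by (rule cst[OF b(2)])
    have "F a j = F b j" by (simp only: e1 e2)
    moreover have "x0 n j = F a j" by (simp only: a(1))
    moreover have "flip j (x0 n) j = F b j" by (simp only: b(1))
    ultimately have "x0 n j = flip j (x0 n) j" by (simp only:)
    moreover have "x0 n j = 1" using j by (simp add: x0_def)
    moreover have "flip j (x0 n) j = -1" using j by (simp add: x0_def flip_def)
    ultimately show False by simp
  qed
  have scov: "\<forall>i<n. \<exists>j<n. D i j"
  proof (intro allI impI, rule ccontr)
    fix i assume i: "i < n" and nd: "\<not> (\<exists>j<n. D i j)"
    have fx: "flip i (x0 n) \<in> cube n" by (rule flip_cube[OF x0_cube i])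
    have "F (flip i (x0 n)) = F (x0 n)"
    proof (rule ext)
      fix j show "F (flip i (x0 n)) j = F (x0 n) j"
      proof (cases "j < n")
        case True
        then have "\<not> D i j" using nd by blast
        then have "infl n (\<lambda>x. F x j) i = 0" by (rule Dz)
        then have "\<forall>x\<in>cube n. F x j = F (flip i x) j" by (simp only: infl_zero_iff)
        then have "F (x0 n) j = F (flip i (x0 n)) j" using x0_cube by blast
        then show ?thesis by (rule sym)
      next
        case False
        then have "n \<le> j" by simp
        have "F (flip i (x0 n)) j = 0" by (rule Fo[OF fx \<open>n \<le> j\<close>])
        moreover have "F (x0 n) j = 0" by (rule Fo[OF x0_cube \<open>n \<le> j\<close>])
        ultimately show ?thesis by (simp only:)
      qed
    qed
    moreover have "inj_on F (cube n)" using bij by (simp add: bij_betw_def)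
    ultimately have "flip i (x0 n) = x0 n"
      using fx x0_cube by (blast dest: inj_onD)
    then show False using flip_neq[OF x0_cube i] by (simp only:)
  qed
  show ?thesis
  proof
    assume H: "\<forall>i<n. fdeg n (\<lambda>x. F x i) = 1"
    have dj: "\<forall>S\<subseteq>{..<n}. fcoeff n (\<lambda>x. F x j) S \<noteq> 0 \<longrightarrow> card S \<le> 1" if "j < n" for j
      using fdeg1_D(1)[of n "\<lambda>x. F x j"] H that by blast
    have uniq: "i = l" if "j < n" "i < n" "l < n" "D i j" "D l j" for i j l
    proof (rule bool_one[OF dj[OF that(1)] _ that(2,3)])
      show "\<forall>x\<in>cube n. F x j = 1 \<or> F x j = - 1" using Fb that(1) by auto
      show "fcoeff n (\<lambda>x. F x j) {i} \<noteq> 0" using deg1_infl[OF dj[OF that(1)] that(2)] that(4) D_def by simp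
      show "fcoeff n (\<lambda>x. F x j) {l} \<noteq> 0" using deg1_infl[OF dj[OF that(1)] that(3)] that(5) D_def by simp
    qed
    define \<sigma> where "\<sigma> = (\<lambda>j. SOME i. i < n \<and> D i j)"
    have sig: "\<sigma> j < n \<and> D (\<sigma> j) j" if "j < n" for j
    proof -
      have "\<exists>i. i < n \<and> D i j" using cov that by blast
      then show ?thesis unfolding \<sigma>_def by (rule someI_ex)
    qed
    have sigu: "i = \<sigma> j" if "j < n" "i < n" "D i j" for i j
      using uniq[OF that(1,2) _ that(3)] sig[OF that(1)] by blast
    have im: "\<sigma> ` {..<n} = {..<n}"
    proof
      show "\<sigma> ` {..<n} \<subseteq> {..<n}" using sig by auto
      show "{..<n} \<subseteq> \<sigma> ` {..<n}"
      proof
        fix i assume "i \<in> {..<n}"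
        then obtain j where "j < n" "D i j" using scov by auto
        then show "i \<in> \<sigma> ` {..<n}" using sigu \<open>i \<in> {..<n}\<close> by auto
      qed
    qed
    have inj: "inj_on \<sigma> {..<n}" by (rule eq_card_imp_inj_on) (auto simp: im)
    show "\<forall>S. S \<subseteq> {..<n} \<and> card S = k \<longrightarrow>
      (\<exists>T. T \<subseteq> {..<n} \<and> card T = k \<and>
        (\<forall>j\<in>T. \<exists>i\<in>S. infl n (\<lambda>x. F x j) i > 0) \<and>
        (\<forall>j\<in>{..<n} - T. \<forall>i\<in>S. infl n (\<lambda>x. F x j) i = 0))"
    proof (intro allI impI)
      fix S assume S: "S \<subseteq> {..<n} \<and> card S = k"
      define T where "T = {j. j < n \<and> (\<exists>i\<in>S. D i j)}"
      have T2: "T = {j \<in> {..<n}. \<sigma> j \<in> S}"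
        unfolding T_def using sig sigu S by auto
      have "\<sigma> ` T = S"
      proof
        show "\<sigma> ` T \<subseteq> S" using T2 by auto
        show "S \<subseteq> \<sigma> ` T"
        proof
          fix i assume "i \<in> S"
          then have "i \<in> \<sigma> ` {..<n}" using im S by auto
          then obtain j where "j < n" "\<sigma> j = i" by auto
          then show "i \<in> \<sigma> ` T" using T2 \<open>i \<in> S\<close> by auto
        qed
      qed
      moreover have "inj_on \<sigma> T" using inj T2 by (auto intro: inj_on_subset)
      ultimately have "card T = card S" using card_image[of \<sigma> T] by simp
      then have "card T = k" using S by simp
      moreover have "T \<subseteq> {..<n}" unfolding T_def by auto
      moreover have "\<forall>j\<in>T. \<exists>i\<in>S. infl n (\<lambda>x. F x j) i > 0" unfolding T_def D_def by auto
      moreover have "\<forall>j\<in>{..<n} - T. \<forall>i\<in>S. infl n (\<lambda>x. F x j) i = 0"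
        using Dz unfolding T_def by auto
      ultimately show "\<exists>T. T \<subseteq> {..<n} \<and> card T = k \<and>
        (\<forall>j\<in>T. \<exists>i\<in>S. infl n (\<lambda>x. F x j) i > 0) \<and>
        (\<forall>j\<in>{..<n} - T. \<forall>i\<in>S. infl n (\<lambda>x. F x j) i = 0)" by blast
    qed
  next
    assume C: "\<forall>S. S \<subseteq> {..<n} \<and> card S = k \<longrightarrow>
      (\<exists>T. T \<subseteq> {..<n} \<and> card T = k \<and>
        (\<forall>j\<in>T. \<exists>i\<in>S. infl n (\<lambda>x. F x j) i > 0) \<and>
        (\<forall>j\<in>{..<n} - T. \<forall>i\<in>S. infl n (\<lambda>x. F x j) i = 0))"
    have hk: "card {j. j < n \<and> (\<exists>i\<in>S. D i j)} \<le> k" if S: "S \<subseteq> {..<n}" "card S = k" for S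
    proof -
      have "S \<subseteq> {..<n} \<and> card S = k" using S by (rule conjI)
      then have "\<exists>T. T \<subseteq> {..<n} \<and> card T = k \<and>
        (\<forall>j\<in>T. \<exists>i\<in>S. infl n (\<lambda>x. F x j) i > 0) \<and>
        (\<forall>j\<in>{..<n} - T. \<forall>i\<in>S. infl n (\<lambda>x. F x j) i = 0)" using C by (elim allE impE)
      then obtain T where T: "T \<subseteq> {..<n}" "card T = k"
        "\<forall>j\<in>{..<n} - T. \<forall>i\<in>S. infl n (\<lambda>x. F x j) i = 0" by (elim exE conjE) (rule that)
      have "{j. j < n \<and> (\<exists>i\<in>S. D i j)} \<subseteq> T"
      proof
        fix j assume "j \<in> {j. j < n \<and> (\<exists>i\<in>S. D i j)}"
        then obtain i where ji: "j < n" "i \<in> S" "D i j" by blast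
        show "j \<in> T"
        proof (rule ccontr)
          assume "j \<notin> T"
          then have "j \<in> {..<n} - T" using ji(1) by simp
          then have "infl n (\<lambda>x. F x j) i = 0" using T(3) ji(2) by blast
          moreover have "infl n (\<lambda>x. F x j) i > 0" using ji(3) unfolding D_def .
          ultimately show False by simp
        qed
      qed
      moreover have "finite T" using T(1) finite_subset by blast
      ultimately have "card {j. j < n \<and> (\<exists>i\<in>S. D i j)} \<le> card T" by (rule card_mono[rotated])
      then show "card {j. j < n \<and> (\<exists>i\<in>S. D i j)} \<le> k" using T(2) by simp
    qed
    have covm: "\<exists>i<n. D i j" if "j < n" for j using cov that by blast
    show "\<forall>j<n. fdeg n (\<lambda>x. F x j) = 1"
    proof (intro allI impI)
      fix j assume j: "j < n"
      obtain i0 where i0: "i0 < n" "D i0 j" using covm[OF j] by blast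
      have u: "l = i0" if "l < n" "D l j" for l
        by (rule comb_unique[OF assms(3) kn hk covm j that i0])
      have d: "\<forall>S\<subseteq>{..<n}. fcoeff n (\<lambda>x. F x j) S \<noteq> 0 \<longrightarrow> card S \<le> 1"
      proof (intro allI impI)
        fix S assume S: "S \<subseteq> {..<n}" "fcoeff n (\<lambda>x. F x j) S \<noteq> 0"
        have "S \<subseteq> {i0}"
        proof
          fix l assume l: "l \<in> S"
          then have ln: "l < n" using S by blast
          show "l \<in> {i0}"
          proof (rule ccontr)
            assume "l \<notin> {i0}"
            then have "l \<noteq> i0" by simp
            then have "\<not> D l j" using u[OF ln] by blast
            then have "infl n (\<lambda>x. F x j) l = 0" by (rule Dz)
            then have "\<forall>S\<subseteq>{..<n}. l \<in> S \<longrightarrow> fcoeff n (\<lambda>x. F x j) S = 0"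
              using infl_zero_coeff[OF ln] by blast
            then have "fcoeff n (\<lambda>x. F x j) S = 0" using S(1) l by blast
            then show False using S(2) by simp
          qed
        qed
        then show "card S \<le> 1" using card_mono[of "{i0}" S] by simp
      qed
      have "infl n (\<lambda>x. F x j) i0 > 0" using i0(2) unfolding D_def .
      then have "fcoeff n (\<lambda>x. F x j) {i0} \<noteq> 0" using deg1_infl[OF d i0(1)] by blast
      then show "fdeg n (\<lambda>x. F x j) = 1" by (rule fdeg1_I[OF d i0(1)])
    qed
  qed
qed

end
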